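(* The order $n[1,3;5]$ of a $[1,3;5]$-mixed cage satisfies $20\le n[1,3;5]\le 28$.
   Context: A mixed graph is a finite simple graph that may contain both edges and arcs. A $[z,r;g]$-mixed graph is a mixed graph in which every vertex is the tail of exactly $z$ arcs, the head of exactly $z$ arcs, and is incident with exactly $r$ edges, and whose girth is $g$. Walks traverse edges in either direction and arcs only in their direction; a cycle is a closed walk with no repeated vertices (other than start = end) and no repeated edge or arc; the girth is the length of a shortest cycle. A $[z,r;g]$-mixed cage is a $[z,r;g]$-mixed graph of minimum order, and $n[z,r;g]$ denotes its order. *)

theory Defs
  imports Main
begin

text \<open>Simplicity: no loops, no pair of
  vertices joined by both an edge and an arc, no pair of opposite arcs
  (such a pair would be an edge).\<close>
definition mixed_graph :: "nat set \<Rightarrow> nat set set \<Rightarrow> (nat \<times> nat) set \<Rightarrow> bool" where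
  "mixed_graph V E A \<longleftrightarrow> finite V
     \<and> (\<forall>e\<in>E. \<exists>u v. u \<in> V \<and> v \<in> V \<and> u \<noteq> v \<and> e = {u, v})
     \<and> A \<subseteq> V \<times> V
     \<and> (\<forall>u. (u, u) \<notin> A)
     \<and> (\<forall>u v. (u, v) \<in> A \<longrightarrow> (v, u) \<notin> A \<and> {u, v} \<notin> E)"

text \<open>A cycle of length k: distinct vertices vs!0, ..., vs!(k-1), where step i
  goes from vs!i to vs!((i+1) mod k), along an arc (in its direction) if bs!i,
  and along an edge otherwise; no edge or arc is used twice.\<close>
definition cycle_step :: "nat list \<Rightarrow> bool list \<Rightarrow> nat \<Rightarrow> (nat set + nat \<times> nat)" where
  "cycle_step vs bs i =
     (let k = length vs; u = vs ! i; v = vs ! ((i + 1) mod k)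
      in if bs ! i then Inr (u, v) else Inl {u, v})"

definition has_cycle_of_length :: "nat set \<Rightarrow> nat set set \<Rightarrow> (nat \<times> nat) set \<Rightarrow> nat \<Rightarrow> bool" where
  "has_cycle_of_length V E A k \<longleftrightarrow>
     (\<exists>vs bs. k \<ge> 1 \<and> length vs = k \<and> length bs = k \<and> distinct vs \<and> set vs \<subseteq> V
        \<and> (\<forall>i<k. if bs ! i then (vs ! i, vs ! ((i + 1) mod k)) \<in> A
                 else {vs ! i, vs ! ((i + 1) mod k)} \<in> E)
        \<and> distinct (map (cycle_step vs bs) [0..<k]))"

definition girth :: "nat set \<Rightarrow> nat set set \<Rightarrow> (nat \<times> nat) set \<Rightarrow> nat \<Rightarrow> bool" where
  "girth V E A g \<longleftrightarrow> has_cycle_of_length V E A g \<and> (\<forall>k<g. \<not> has_cycle_of_length V E A k)"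

definition zrg_mixed_graph :: "nat \<Rightarrow> nat \<Rightarrow> nat \<Rightarrow> nat set \<Rightarrow> nat set set \<Rightarrow> (nat \<times> nat) set \<Rightarrow> bool" where
  "zrg_mixed_graph z r g V E A \<longleftrightarrow> mixed_graph V E A
     \<and> (\<forall>u\<in>V. card {v. (u, v) \<in> A} = z \<and> card {v. (v, u) \<in> A} = z
              \<and> card {e\<in>E. u \<in> e} = r)
     \<and> girth V E A g"

definition mixed_cage_order :: "nat \<Rightarrow> nat \<Rightarrow> nat \<Rightarrow> nat" where
  "mixed_cage_order z r g = (LEAST n. \<exists>V E A. zrg_mixed_graph z r g V E A \<and> card V = n)"

end

theory Submission
  imports Defs
begin


definition adj :: "nat set set \<Rightarrow> (nat \<times> nat) set \<Rightarrow> nat \<Rightarrow> nat \<Rightarrow> bool" where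
  "adj E A a b \<longleftrightarrow> (a, b) \<in> A \<or> {a, b} \<in> E"

lemma adjE1: "{a,b} \<in> E \<Longrightarrow> adj E A a b" by (simp add: adj_def)
lemma adjE2: "{a,b} \<in> E \<Longrightarrow> adj E A b a" by (simp add: adj_def insert_commute)
lemma adjA: "(a,b) \<in> A \<Longrightarrow> adj E A a b" by (simp add: adj_def)

lemma mg_edge: assumes "mixed_graph V E A" "{a,b} \<in> E" shows "a \<noteq> b" "a \<in> V" "b \<in> V"
proof -
  from assms obtain p q where "p \<in> V" "q \<in> V" "p \<noteq> q" "{a,b} = {p,q}"
    unfolding mixed_graph_def by blast
  then show "a \<noteq> b" "a \<in> V" "b \<in> V" by (auto simp: doubleton_eq_iff)
qed

lemma mg_arc: assumes "mixed_graph V E A" "(a,b) \<in> A"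
  shows "a \<noteq> b" "a \<in> V" "b \<in> V" "(b,a) \<notin> A" "{a,b} \<notin> E" "{b,a} \<notin> E"
  using assms unfolding mixed_graph_def by (auto simp: insert_commute)

lemma mg_adjV: assumes "mixed_graph V E A" "adj E A a b" shows "a \<in> V" "b \<in> V"
  using assms mg_edge(2,3)[OF assms(1)] mg_arc(2,3)[OF assms(1)] unfolding adj_def by blast+

lemma u3: "[0..<3] = [0::nat,1,2]" by (simp add: upt_rec)
lemma u4: "[0..<4] = [0::nat,1,2,3]" by (simp add: upt_rec)
lemma all3: "(\<forall>i::nat<3. P i) \<longleftrightarrow> P 0 \<and> P 1 \<and> P 2"
  by (auto simp: less_Suc_eq numeral_3_eq_3 numeral_2_eq_2)
lemma all4: "(\<forall>i::nat<4. P i) \<longleftrightarrow> P 0 \<and> P 1 \<and> P 2 \<and> P 3"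
  by (auto simp: less_Suc_eq numeral_3_eq_3 numeral_2_eq_2 eval_nat_numeral)

lemma cyc3: assumes "mixed_graph V E A" "adj E A a b" "adj E A b c" "adj E A c a"
  "a \<noteq> b" "b \<noteq> c" "a \<noteq> c"
  shows "has_cycle_of_length V E A 3"
proof -
  let ?vs = "[a,b,c]" and ?bs = "[(a,b)\<in>A, (b,c)\<in>A, (c,a)\<in>A]"
  have V: "a \<in> V" "b \<in> V" "c \<in> V" using mg_adjV[OF assms(1)] assms(2,3) by auto
  have st: "\<forall>i<3. if ?bs ! i then (?vs ! i, ?vs ! ((i + 1) mod 3)) \<in> A
                 else {?vs ! i, ?vs ! ((i + 1) mod 3)} \<in> E"
    unfolding all3 using assms(2-4) unfolding adj_def by auto
  have d: "distinct (map (cycle_step ?vs ?bs) [0..<3])"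
    using assms(5-7) unfolding u3 by (simp add: cycle_step_def doubleton_eq_iff)
  have "3 \<ge> (1::nat)" "length ?vs = 3" "length ?bs = 3" "distinct ?vs" "set ?vs \<subseteq> V"
    using V assms(5-7) by auto
  then show ?thesis unfolding has_cycle_of_length_def using st d by blast
qed

lemma cyc4: assumes "mixed_graph V E A" "adj E A a b" "adj E A b c" "adj E A c d" "adj E A d a"
  "a \<noteq> b" "b \<noteq> c" "a \<noteq> c" "a \<noteq> d" "b \<noteq> d" "c \<noteq> d"
  shows "has_cycle_of_length V E A 4"
proof -
  let ?vs = "[a,b,c,d]" and ?bs = "[(a,b)\<in>A, (b,c)\<in>A, (c,d)\<in>A, (d,a)\<in>A]"
  have V: "a \<in> V" "b \<in> V" "c \<in> V" "d \<in> V" using mg_adjV[OF assms(1)] assms(2,3,4) by auto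
  have st: "\<forall>i<4. if ?bs ! i then (?vs ! i, ?vs ! ((i + 1) mod 4)) \<in> A
                 else {?vs ! i, ?vs ! ((i + 1) mod 4)} \<in> E"
    unfolding all4 using assms(2-5) unfolding adj_def by auto
  have dd: "distinct (map (cycle_step ?vs ?bs) [0..<4])"
    using assms(6-11) unfolding u4 by (simp add: cycle_step_def doubleton_eq_iff)
  have "4 \<ge> (1::nat)" "length ?vs = 4" "length ?bs = 4" "distinct ?vs" "set ?vs \<subseteq> V"
    using V assms(6-11) by auto
  then show ?thesis unfolding has_cycle_of_length_def using st dd by blast
qed

lemma E_flip: "{a,b} \<in> E \<Longrightarrow> {b,a} \<in> E" by (simp add: insert_commute)

lemma u1: "[0..<1] = [0::nat]" by simp
lemma u2: "[0..<2] = [0::nat,1]" by (simp add: upt_rec)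

lemma no_cyc1: assumes "mixed_graph V E A" shows "\<not> has_cycle_of_length V E A 1"
proof
  assume "has_cycle_of_length V E A 1"
  then obtain vs bs where "length vs = 1" "length bs = 1"
    "\<forall>i<1. if bs ! i then (vs ! i, vs ! ((i + 1) mod 1)) \<in> A else {vs ! i, vs ! ((i + 1) mod 1)} \<in> E"
    unfolding has_cycle_of_length_def by blast
  then have "if bs ! 0 then (vs ! 0, vs ! 0) \<in> A else {vs ! 0, vs ! 0} \<in> E" by auto
  then show False using mg_arc(1)[OF assms, of "vs!0" "vs!0"] mg_edge(1)[OF assms, of "vs!0" "vs!0"]
    by (cases "bs!0") auto
qed

lemma no_cyc2: assumes "mixed_graph V E A" shows "\<not> has_cycle_of_length V E A 2"
proof
  assume "has_cycle_of_length V E A 2"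
  then obtain vs bs where L: "length vs = 2" "length bs = 2"
    and st: "\<forall>i<2. if bs ! i then (vs ! i, vs ! ((i + 1) mod 2)) \<in> A else {vs ! i, vs ! ((i + 1) mod 2)} \<in> E"
    and d: "distinct (map (cycle_step vs bs) [0..<2])"
    unfolding has_cycle_of_length_def by blast
  obtain a b where vs: "vs = [a,b]" using L(1)
    by (metis (no_types, lifting) One_nat_def Suc_1 length_0_conv length_Suc_conv)
  obtain p q where bs: "bs = [p,q]" using L(2)
    by (metis (no_types, lifting) One_nat_def Suc_1 length_0_conv length_Suc_conv)
  have s0: "if p then (a,b) \<in> A else {a,b} \<in> E" using st vs bs by (auto dest: spec[of _ 0])
  have s1: "if q then (b,a) \<in> A else {b,a} \<in> E" using st vs bs by (auto dest: spec[of _ 1])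
  have d': "cycle_step vs bs 0 \<noteq> cycle_step vs bs 1" using d unfolding u2 by simp
  show False
  proof (cases p)
    case True
    then have "(a,b) \<in> A" using s0 by simp
    then show ?thesis using s1 mg_arc[OF assms] by (auto split: if_splits)
  next
    case False
    then have e: "{a,b} \<in> E" using s0 by simp
    show ?thesis
    proof (cases q)
      case True
      then show ?thesis using s1 e mg_arc[OF assms] by auto
    next
      case False
      then show ?thesis using d' \<open>\<not> p\<close> vs bs by (simp add: cycle_step_def insert_commute)
    qed
  qed
qed

context
  fixes V E A assumes G: "zrg_mixed_graph 1 3 5 V E A"
begin

lemma G_mg: "mixed_graph V E A" using G unfolding zrg_mixed_graph_def by blast

lemma no3: "adj E A a b \<Longrightarrow> adj E A b c \<Longrightarrow> adj E A c a \<Longrightarrow> a \<noteq> b \<Longrightarrow> b \<noteq> c \<Longrightarrow> a \<noteq> c \<Longrightarrow> False"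
  using cyc3[OF G_mg] G unfolding zrg_mixed_graph_def girth_def by auto

lemma no4: "adj E A a b \<Longrightarrow> adj E A b c \<Longrightarrow> adj E A c d \<Longrightarrow> adj E A d a \<Longrightarrow>
  a \<noteq> b \<Longrightarrow> b \<noteq> c \<Longrightarrow> a \<noteq> c \<Longrightarrow> a \<noteq> d \<Longrightarrow> b \<noteq> d \<Longrightarrow> c \<noteq> d \<Longrightarrow> False"
  using cyc4[OF G_mg] G unfolding zrg_mixed_graph_def girth_def by auto

lemma neA: "(a,b) \<in> A \<Longrightarrow> a \<noteq> b" using mg_arc(1)[OF G_mg] .
lemma neE: "{a,b} \<in> E \<Longrightarrow> a \<noteq> b" using mg_edge(1)[OF G_mg] .
lemma arcV1: "(a,b) \<in> A \<Longrightarrow> a \<in> V" using mg_arc(2)[OF G_mg] .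
lemma arcV2: "(a,b) \<in> A \<Longrightarrow> b \<in> V" using mg_arc(3)[OF G_mg] .
lemma edgeV1: "{a,b} \<in> E \<Longrightarrow> a \<in> V" using mg_edge(2)[OF G_mg] .
lemma edgeV2: "{a,b} \<in> E \<Longrightarrow> b \<in> V" using mg_edge(3)[OF G_mg] .
lemma ae1: "(a,c) \<in> A \<Longrightarrow> {b,c} \<in> E \<Longrightarrow> a \<noteq> b" using mg_arc(5)[OF G_mg, of a c] by auto
lemma ae2: "(c,a) \<in> A \<Longrightarrow> {b,c} \<in> E \<Longrightarrow> a \<noteq> b" using mg_arc(6)[OF G_mg, of c a] by auto
lemma aa: "(a,c) \<in> A \<Longrightarrow> (c,b) \<in> A \<Longrightarrow> a \<noteq> b" using mg_arc(4)[OF G_mg] by blast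

lemma out_card: "a \<in> V \<Longrightarrow> card {b. (a,b) \<in> A} = 1" using G unfolding zrg_mixed_graph_def by blast
lemma in_card: "a \<in> V \<Longrightarrow> card {b. (b,a) \<in> A} = 1" using G unfolding zrg_mixed_graph_def by blast

lemma out_ex: "a \<in> V \<Longrightarrow> \<exists>b. (a,b) \<in> A" using out_card by (fastforce simp: card_1_singleton_iff)
lemma in_ex: "a \<in> V \<Longrightarrow> \<exists>b. (b,a) \<in> A" using in_card by (fastforce simp: card_1_singleton_iff)
lemma outu: "(a,c) \<in> A \<Longrightarrow> (b,d) \<in> A \<Longrightarrow> c \<noteq> d \<Longrightarrow> a \<noteq> b"
proof
  assume h: "(a,c) \<in> A" "(b,d) \<in> A" "c \<noteq> d" "a = b"
  then have "card {y. (a,y) \<in> A} = 1" using out_card arcV1 by blast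
  then obtain z where z: "{y. (a,y) \<in> A} = {z}" by (auto simp: card_1_singleton_iff)
  have "c \<in> {y. (a,y) \<in> A}" "d \<in> {y. (a,y) \<in> A}" using h by auto
  then show False using h(3) unfolding z by simp
qed
lemma inu: "(c,a) \<in> A \<Longrightarrow> (d,b) \<in> A \<Longrightarrow> c \<noteq> d \<Longrightarrow> a \<noteq> b"
proof
  assume h: "(c,a) \<in> A" "(d,b) \<in> A" "c \<noteq> d" "a = b"
  then have "card {y. (y,a) \<in> A} = 1" using in_card arcV2 by blast
  then obtain z where z: "{y. (y,a) \<in> A} = {z}" by (auto simp: card_1_singleton_iff)
  have "c \<in> {y. (y,a) \<in> A}" "d \<in> {y. (y,a) \<in> A}" using h by auto
  then show False using h(3) unfolding z by simp
qed

lemma tri: "adj E A a c \<Longrightarrow> adj E A c d \<Longrightarrow> adj E A d b \<Longrightarrow> c \<noteq> d \<Longrightarrow> a \<noteq> c \<or> b \<noteq> c \<Longrightarrow>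
  a \<noteq> d \<or> b \<noteq> d \<Longrightarrow> a \<noteq> b"
  using no3 by blast
lemma quad: "adj E A a c \<Longrightarrow> adj E A c d \<Longrightarrow> adj E A d f \<Longrightarrow> adj E A f b \<Longrightarrow>
  c \<noteq> d \<Longrightarrow> d \<noteq> f \<Longrightarrow> c \<noteq> f \<Longrightarrow> a \<noteq> c \<or> b \<noteq> c \<Longrightarrow> a \<noteq> d \<or> b \<noteq> d \<Longrightarrow> a \<noteq> f \<or> b \<noteq> f \<Longrightarrow> a \<noteq> b"
  using no4 by blast

lemma nbr_card: assumes "a \<in> V" shows "card {b. {a,b} \<in> E} = 3"
proof -
  have c: "card {e\<in>E. a \<in> e} = 3" using G assms unfolding zrg_mixed_graph_def by blast
  have img: "{e\<in>E. a \<in> e} = (\<lambda>b. {a,b}) ` {b. {a,b} \<in> E}"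
  proof
    show "{e\<in>E. a \<in> e} \<subseteq> (\<lambda>b. {a,b}) ` {b. {a,b} \<in> E}"
    proof
      fix e assume e: "e \<in> {e\<in>E. a \<in> e}"
      then obtain p q where "e = {p,q}" using G_mg unfolding mixed_graph_def by blast
      moreover have "a = p \<or> a = q" using e \<open>e = {p,q}\<close> by auto
      ultimately show "e \<in> (\<lambda>b. {a,b}) ` {b. {a,b} \<in> E}"
      proof (elim disjE)
        assume "e = {p,q}" "a = p" then show ?thesis using e by auto
      next
        assume "e = {p,q}" "a = q" then have "e = {a,p}" by (simp add: insert_commute)
        then show ?thesis using e by auto
      qed
    qed
  qed auto
  have inj: "inj_on (\<lambda>b. {a,b}) {b. {a,b} \<in> E}"
    by (auto simp: inj_on_def doubleton_eq_iff)
  show ?thesis using c unfolding img card_image[OF inj] .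
qed

lemma three: assumes "a \<in> V"
  obtains p q r where "{a,p} \<in> E" "{a,q} \<in> E" "{a,r} \<in> E" "p \<noteq> q" "q \<noteq> r" "p \<noteq> r"
proof -
  from nbr_card[OF assms] obtain p q r where "{b. {a,b} \<in> E} = {p,q,r}" "p \<noteq> q" "q \<noteq> r" "p \<noteq> r"
    unfolding card_3_iff by blast
  then show ?thesis using that by blast
qed

lemma two_other: assumes "{a,b} \<in> E"
  obtains p q where "{a,p} \<in> E" "{a,q} \<in> E" "p \<noteq> q" "p \<noteq> b" "q \<noteq> b"
proof -
  have "a \<in> V" using edgeV1 assms .
  then have "card {c. {a,c} \<in> E} = 3" by (rule nbr_card)
  moreover have "b \<in> {c. {a,c} \<in> E}" using assms by simp
  ultimately have "card ({c. {a,c} \<in> E} - {b}) = 2"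
    by (simp add: card_Diff_singleton_if)
  then obtain p q where "{c. {a,c} \<in> E} - {b} = {p,q}" "p \<noteq> q" unfolding card_2_iff by blast
  then show ?thesis using that by blast
qed

lemma lower_bound: "20 \<le> card V"
proof -
  obtain vs bs where "length vs = 5" "set vs \<subseteq> V"
    using G unfolding zrg_mixed_graph_def girth_def has_cycle_of_length_def by blast
  then have uV: "vs ! 0 \<in> V" by (metis nth_mem subsetD zero_less_numeral)
  define u where "u = vs ! 0"
  have uV: "u \<in> V" using uV u_def by simp
  obtain v where Auv: "(u,v) \<in> A" using out_ex[OF uV] by blast
  obtain x where Axu: "(x,u) \<in> A" using in_ex[OF uV] by blast
  obtain s where Avs: "(v,s) \<in> A" using out_ex[OF arcV2[OF Auv]] by blast
  obtain t where Atx: "(t,x) \<in> A" using in_ex[OF arcV1[OF Axu]] by blast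
  obtain e1 e2 e3 where Eue1: "{u,e1} \<in> E" and Eue2: "{u,e2} \<in> E" and Eue3: "{u,e3} \<in> E"
    and g_e1_e2: "e1 \<noteq> e2" and g_e2_e3: "e2 \<noteq> e3" and g_e1_e3: "e1 \<noteq> e3" by (rule three[OF uV])
  obtain y1 y2 y3 where Evy1: "{v,y1} \<in> E" and Evy2: "{v,y2} \<in> E" and Evy3: "{v,y3} \<in> E"
    and g_y1_y2: "y1 \<noteq> y2" and g_y2_y3: "y2 \<noteq> y3" and g_y1_y3: "y1 \<noteq> y3" by (rule three[OF arcV2[OF Auv]])
  obtain p1 p2 p3 where Exp1: "{x,p1} \<in> E" and Exp2: "{x,p2} \<in> E" and Exp3: "{x,p3} \<in> E"
    and g_p1_p2: "p1 \<noteq> p2" and g_p2_p3: "p2 \<noteq> p3" and g_p1_p3: "p1 \<noteq> p3" by (rule three[OF arcV1[OF Axu]])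
  obtain w11 w12 where Ee1w11: "{e1,w11} \<in> E" and Ee1w12: "{e1,w12} \<in> E"
    and g_w11_w12: "w11 \<noteq> w12" and g_w11_u: "w11 \<noteq> u" and g_w12_u: "w12 \<noteq> u"
    by (rule two_other[OF E_flip[OF Eue1]])
  obtain w21 w22 where Ee2w21: "{e2,w21} \<in> E" and Ee2w22: "{e2,w22} \<in> E"
    and g_w21_w22: "w21 \<noteq> w22" and g_w21_u: "w21 \<noteq> u" and g_w22_u: "w22 \<noteq> u"
    by (rule two_other[OF E_flip[OF Eue2]])
  obtain w31 w32 where Ee3w31: "{e3,w31} \<in> E" and Ee3w32: "{e3,w32} \<in> E"
    and g_w31_w32: "w31 \<noteq> w32" and g_w31_u: "w31 \<noteq> u" and g_w32_u: "w32 \<noteq> u"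
    by (rule two_other[OF E_flip[OF Eue3]])
  have n_u_e1: "u \<noteq> e1" by (rule neE[OF Eue1])
  have n_u_e2: "u \<noteq> e2" by (rule neE[OF Eue2])
  have n_u_e3: "u \<noteq> e3" by (rule neE[OF Eue3])
  have n_u_v: "u \<noteq> v" by (rule neA[OF Auv])
  have n_u_y1: "u \<noteq> y1" by (rule ae1[OF Auv E_flip[OF Evy1]])
  have n_u_y2: "u \<noteq> y2" by (rule ae1[OF Auv E_flip[OF Evy2]])
  have n_u_y3: "u \<noteq> y3" by (rule ae1[OF Auv E_flip[OF Evy3]])
  have n_u_x: "u \<noteq> x" by (rule not_sym[OF neA[OF Axu]])
  have n_u_p1: "u \<noteq> p1" by (rule ae2[OF Axu E_flip[OF Exp1]])
  have n_u_p2: "u \<noteq> p2" by (rule ae2[OF Axu E_flip[OF Exp2]])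
  have n_u_p3: "u \<noteq> p3" by (rule ae2[OF Axu E_flip[OF Exp3]])
  have n_u_s: "u \<noteq> s" by (rule aa[OF Auv Avs])
  have n_u_t: "u \<noteq> t" by (rule not_sym[OF aa[OF Atx Axu]])
  have n_e1_w11: "e1 \<noteq> w11" by (rule neE[OF Ee1w11])
  have n_e1_w12: "e1 \<noteq> w12" by (rule neE[OF Ee1w12])
  have n_e1_w21: "e1 \<noteq> w21" by (rule tri[OF adjE2[OF Eue1] adjE1[OF Eue2] adjE1[OF Ee2w21] n_u_e2 disjI1[OF not_sym[OF n_u_e1]] disjI1[OF g_e1_e2]])
  have n_e1_w22: "e1 \<noteq> w22" by (rule tri[OF adjE2[OF Eue1] adjE1[OF Eue2] adjE1[OF Ee2w22] n_u_e2 disjI1[OF not_sym[OF n_u_e1]] disjI1[OF g_e1_e2]])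
  have n_e1_w31: "e1 \<noteq> w31" by (rule tri[OF adjE2[OF Eue1] adjE1[OF Eue3] adjE1[OF Ee3w31] n_u_e3 disjI1[OF not_sym[OF n_u_e1]] disjI1[OF g_e1_e3]])
  have n_e1_w32: "e1 \<noteq> w32" by (rule tri[OF adjE2[OF Eue1] adjE1[OF Eue3] adjE1[OF Ee3w32] n_u_e3 disjI1[OF not_sym[OF n_u_e1]] disjI1[OF g_e1_e3]])
  have n_e1_v: "e1 \<noteq> v" by (rule not_sym[OF ae2[OF Auv E_flip[OF Eue1]]])
  have n_e1_y1: "e1 \<noteq> y1" by (rule tri[OF adjE2[OF Eue1] adjA[OF Auv] adjE1[OF Evy1] n_u_v disjI1[OF not_sym[OF n_u_e1]] disjI1[OF n_e1_v]])
  have n_e1_y2: "e1 \<noteq> y2" by (rule tri[OF adjE2[OF Eue1] adjA[OF Auv] adjE1[OF Evy2] n_u_v disjI1[OF not_sym[OF n_u_e1]] disjI1[OF n_e1_v]])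
  have n_e1_y3: "e1 \<noteq> y3" by (rule tri[OF adjE2[OF Eue1] adjA[OF Auv] adjE1[OF Evy3] n_u_v disjI1[OF not_sym[OF n_u_e1]] disjI1[OF n_e1_v]])
  have n_e1_x: "e1 \<noteq> x" by (rule not_sym[OF ae1[OF Axu E_flip[OF Eue1]]])
  have n_e1_p1: "e1 \<noteq> p1" by (rule not_sym[OF tri[OF adjE2[OF Exp1] adjA[OF Axu] adjE1[OF Eue1] not_sym[OF n_u_x] disjI2[OF n_e1_x] disjI1[OF not_sym[OF n_u_p1]]]])
  have n_e1_p2: "e1 \<noteq> p2" by (rule not_sym[OF tri[OF adjE2[OF Exp2] adjA[OF Axu] adjE1[OF Eue1] not_sym[OF n_u_x] disjI2[OF n_e1_x] disjI1[OF not_sym[OF n_u_p2]]]])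
  have n_e1_p3: "e1 \<noteq> p3" by (rule not_sym[OF tri[OF adjE2[OF Exp3] adjA[OF Axu] adjE1[OF Eue1] not_sym[OF n_u_x] disjI2[OF n_e1_x] disjI1[OF not_sym[OF n_u_p3]]]])
  have n_e1_s: "e1 \<noteq> s" by (rule tri[OF adjE2[OF Eue1] adjA[OF Auv] adjA[OF Avs] n_u_v disjI1[OF not_sym[OF n_u_e1]] disjI1[OF n_e1_v]])
  have n_e1_t: "e1 \<noteq> t" by (rule not_sym[OF tri[OF adjA[OF Atx] adjA[OF Axu] adjE1[OF Eue1] not_sym[OF n_u_x] disjI2[OF n_e1_x] disjI1[OF not_sym[OF n_u_t]]]])
  have n_e2_w11: "e2 \<noteq> w11" by (rule tri[OF adjE2[OF Eue2] adjE1[OF Eue1] adjE1[OF Ee1w11] n_u_e1 disjI1[OF not_sym[OF n_u_e2]] disjI1[OF not_sym[OF g_e1_e2]]])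
  have n_e2_w12: "e2 \<noteq> w12" by (rule tri[OF adjE2[OF Eue2] adjE1[OF Eue1] adjE1[OF Ee1w12] n_u_e1 disjI1[OF not_sym[OF n_u_e2]] disjI1[OF not_sym[OF g_e1_e2]]])
  have n_e2_w21: "e2 \<noteq> w21" by (rule neE[OF Ee2w21])
  have n_e2_w22: "e2 \<noteq> w22" by (rule neE[OF Ee2w22])
  have n_e2_w31: "e2 \<noteq> w31" by (rule tri[OF adjE2[OF Eue2] adjE1[OF Eue3] adjE1[OF Ee3w31] n_u_e3 disjI1[OF not_sym[OF n_u_e2]] disjI1[OF g_e2_e3]])
  have n_e2_w32: "e2 \<noteq> w32" by (rule tri[OF adjE2[OF Eue2] adjE1[OF Eue3] adjE1[OF Ee3w32] n_u_e3 disjI1[OF not_sym[OF n_u_e2]] disjI1[OF g_e2_e3]])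
  have n_e2_v: "e2 \<noteq> v" by (rule not_sym[OF ae2[OF Auv E_flip[OF Eue2]]])
  have n_e2_y1: "e2 \<noteq> y1" by (rule tri[OF adjE2[OF Eue2] adjA[OF Auv] adjE1[OF Evy1] n_u_v disjI1[OF not_sym[OF n_u_e2]] disjI1[OF n_e2_v]])
  have n_e2_y2: "e2 \<noteq> y2" by (rule tri[OF adjE2[OF Eue2] adjA[OF Auv] adjE1[OF Evy2] n_u_v disjI1[OF not_sym[OF n_u_e2]] disjI1[OF n_e2_v]])
  have n_e2_y3: "e2 \<noteq> y3" by (rule tri[OF adjE2[OF Eue2] adjA[OF Auv] adjE1[OF Evy3] n_u_v disjI1[OF not_sym[OF n_u_e2]] disjI1[OF n_e2_v]])
  have n_e2_x: "e2 \<noteq> x" by (rule not_sym[OF ae1[OF Axu E_flip[OF Eue2]]])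
  have n_e2_p1: "e2 \<noteq> p1" by (rule not_sym[OF tri[OF adjE2[OF Exp1] adjA[OF Axu] adjE1[OF Eue2] not_sym[OF n_u_x] disjI2[OF n_e2_x] disjI1[OF not_sym[OF n_u_p1]]]])
  have n_e2_p2: "e2 \<noteq> p2" by (rule not_sym[OF tri[OF adjE2[OF Exp2] adjA[OF Axu] adjE1[OF Eue2] not_sym[OF n_u_x] disjI2[OF n_e2_x] disjI1[OF not_sym[OF n_u_p2]]]])
  have n_e2_p3: "e2 \<noteq> p3" by (rule not_sym[OF tri[OF adjE2[OF Exp3] adjA[OF Axu] adjE1[OF Eue2] not_sym[OF n_u_x] disjI2[OF n_e2_x] disjI1[OF not_sym[OF n_u_p3]]]])
  have n_e2_s: "e2 \<noteq> s" by (rule tri[OF adjE2[OF Eue2] adjA[OF Auv] adjA[OF Avs] n_u_v disjI1[OF not_sym[OF n_u_e2]] disjI1[OF n_e2_v]])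
  have n_e2_t: "e2 \<noteq> t" by (rule not_sym[OF tri[OF adjA[OF Atx] adjA[OF Axu] adjE1[OF Eue2] not_sym[OF n_u_x] disjI2[OF n_e2_x] disjI1[OF not_sym[OF n_u_t]]]])
  have n_e3_w11: "e3 \<noteq> w11" by (rule tri[OF adjE2[OF Eue3] adjE1[OF Eue1] adjE1[OF Ee1w11] n_u_e1 disjI1[OF not_sym[OF n_u_e3]] disjI1[OF not_sym[OF g_e1_e3]]])
  have n_e3_w12: "e3 \<noteq> w12" by (rule tri[OF adjE2[OF Eue3] adjE1[OF Eue1] adjE1[OF Ee1w12] n_u_e1 disjI1[OF not_sym[OF n_u_e3]] disjI1[OF not_sym[OF g_e1_e3]]])
  have n_e3_w21: "e3 \<noteq> w21" by (rule tri[OF adjE2[OF Eue3] adjE1[OF Eue2] adjE1[OF Ee2w21] n_u_e2 disjI1[OF not_sym[OF n_u_e3]] disjI1[OF not_sym[OF g_e2_e3]]])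
  have n_e3_w22: "e3 \<noteq> w22" by (rule tri[OF adjE2[OF Eue3] adjE1[OF Eue2] adjE1[OF Ee2w22] n_u_e2 disjI1[OF not_sym[OF n_u_e3]] disjI1[OF not_sym[OF g_e2_e3]]])
  have n_e3_w31: "e3 \<noteq> w31" by (rule neE[OF Ee3w31])
  have n_e3_w32: "e3 \<noteq> w32" by (rule neE[OF Ee3w32])
  have n_e3_v: "e3 \<noteq> v" by (rule not_sym[OF ae2[OF Auv E_flip[OF Eue3]]])
  have n_e3_y1: "e3 \<noteq> y1" by (rule tri[OF adjE2[OF Eue3] adjA[OF Auv] adjE1[OF Evy1] n_u_v disjI1[OF not_sym[OF n_u_e3]] disjI1[OF n_e3_v]])
  have n_e3_y2: "e3 \<noteq> y2" by (rule tri[OF adjE2[OF Eue3] adjA[OF Auv] adjE1[OF Evy2] n_u_v disjI1[OF not_sym[OF n_u_e3]] disjI1[OF n_e3_v]])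
  have n_e3_y3: "e3 \<noteq> y3" by (rule tri[OF adjE2[OF Eue3] adjA[OF Auv] adjE1[OF Evy3] n_u_v disjI1[OF not_sym[OF n_u_e3]] disjI1[OF n_e3_v]])
  have n_e3_x: "e3 \<noteq> x" by (rule not_sym[OF ae1[OF Axu E_flip[OF Eue3]]])
  have n_e3_p1: "e3 \<noteq> p1" by (rule not_sym[OF tri[OF adjE2[OF Exp1] adjA[OF Axu] adjE1[OF Eue3] not_sym[OF n_u_x] disjI2[OF n_e3_x] disjI1[OF not_sym[OF n_u_p1]]]])
  have n_e3_p2: "e3 \<noteq> p2" by (rule not_sym[OF tri[OF adjE2[OF Exp2] adjA[OF Axu] adjE1[OF Eue3] not_sym[OF n_u_x] disjI2[OF n_e3_x] disjI1[OF not_sym[OF n_u_p2]]]])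
  have n_e3_p3: "e3 \<noteq> p3" by (rule not_sym[OF tri[OF adjE2[OF Exp3] adjA[OF Axu] adjE1[OF Eue3] not_sym[OF n_u_x] disjI2[OF n_e3_x] disjI1[OF not_sym[OF n_u_p3]]]])
  have n_e3_s: "e3 \<noteq> s" by (rule tri[OF adjE2[OF Eue3] adjA[OF Auv] adjA[OF Avs] n_u_v disjI1[OF not_sym[OF n_u_e3]] disjI1[OF n_e3_v]])
  have n_e3_t: "e3 \<noteq> t" by (rule not_sym[OF tri[OF adjA[OF Atx] adjA[OF Axu] adjE1[OF Eue3] not_sym[OF n_u_x] disjI2[OF n_e3_x] disjI1[OF not_sym[OF n_u_t]]]])
  have n_w11_w21: "w11 \<noteq> w21" by (rule quad[OF adjE2[OF Ee1w11] adjE2[OF Eue1] adjE1[OF Eue2] adjE1[OF Ee2w21] not_sym[OF n_u_e1] n_u_e2 g_e1_e2 disjI1[OF not_sym[OF n_e1_w11]] disjI1[OF g_w11_u] disjI1[OF not_sym[OF n_e2_w11]]])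
  have n_w11_w22: "w11 \<noteq> w22" by (rule quad[OF adjE2[OF Ee1w11] adjE2[OF Eue1] adjE1[OF Eue2] adjE1[OF Ee2w22] not_sym[OF n_u_e1] n_u_e2 g_e1_e2 disjI1[OF not_sym[OF n_e1_w11]] disjI1[OF g_w11_u] disjI1[OF not_sym[OF n_e2_w11]]])
  have n_w11_w31: "w11 \<noteq> w31" by (rule quad[OF adjE2[OF Ee1w11] adjE2[OF Eue1] adjE1[OF Eue3] adjE1[OF Ee3w31] not_sym[OF n_u_e1] n_u_e3 g_e1_e3 disjI1[OF not_sym[OF n_e1_w11]] disjI1[OF g_w11_u] disjI1[OF not_sym[OF n_e3_w11]]])
  have n_w11_w32: "w11 \<noteq> w32" by (rule quad[OF adjE2[OF Ee1w11] adjE2[OF Eue1] adjE1[OF Eue3] adjE1[OF Ee3w32] not_sym[OF n_u_e1] n_u_e3 g_e1_e3 disjI1[OF not_sym[OF n_e1_w11]] disjI1[OF g_w11_u] disjI1[OF not_sym[OF n_e3_w11]]])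
  have n_w11_v: "w11 \<noteq> v" by (rule tri[OF adjE2[OF Ee1w11] adjE2[OF Eue1] adjA[OF Auv] not_sym[OF n_u_e1] disjI1[OF not_sym[OF n_e1_w11]] disjI1[OF g_w11_u]])
  have n_w11_y1: "w11 \<noteq> y1" by (rule quad[OF adjE2[OF Ee1w11] adjE2[OF Eue1] adjA[OF Auv] adjE1[OF Evy1] not_sym[OF n_u_e1] n_u_v n_e1_v disjI1[OF not_sym[OF n_e1_w11]] disjI1[OF g_w11_u] disjI1[OF n_w11_v]])
  have n_w11_y2: "w11 \<noteq> y2" by (rule quad[OF adjE2[OF Ee1w11] adjE2[OF Eue1] adjA[OF Auv] adjE1[OF Evy2] not_sym[OF n_u_e1] n_u_v n_e1_v disjI1[OF not_sym[OF n_e1_w11]] disjI1[OF g_w11_u] disjI1[OF n_w11_v]])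
  have n_w11_y3: "w11 \<noteq> y3" by (rule quad[OF adjE2[OF Ee1w11] adjE2[OF Eue1] adjA[OF Auv] adjE1[OF Evy3] not_sym[OF n_u_e1] n_u_v n_e1_v disjI1[OF not_sym[OF n_e1_w11]] disjI1[OF g_w11_u] disjI1[OF n_w11_v]])
  have n_w11_x: "w11 \<noteq> x" by (rule not_sym[OF tri[OF adjA[OF Axu] adjE1[OF Eue1] adjE1[OF Ee1w11] n_u_e1 disjI1[OF not_sym[OF n_u_x]] disjI1[OF not_sym[OF n_e1_x]]]])
  have n_w11_p1: "w11 \<noteq> p1" by (rule not_sym[OF quad[OF adjE2[OF Exp1] adjA[OF Axu] adjE1[OF Eue1] adjE1[OF Ee1w11] not_sym[OF n_u_x] n_u_e1 not_sym[OF n_e1_x] disjI2[OF n_w11_x] disjI1[OF not_sym[OF n_u_p1]] disjI1[OF not_sym[OF n_e1_p1]]]])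
  have n_w11_p2: "w11 \<noteq> p2" by (rule not_sym[OF quad[OF adjE2[OF Exp2] adjA[OF Axu] adjE1[OF Eue1] adjE1[OF Ee1w11] not_sym[OF n_u_x] n_u_e1 not_sym[OF n_e1_x] disjI2[OF n_w11_x] disjI1[OF not_sym[OF n_u_p2]] disjI1[OF not_sym[OF n_e1_p2]]]])
  have n_w11_p3: "w11 \<noteq> p3" by (rule not_sym[OF quad[OF adjE2[OF Exp3] adjA[OF Axu] adjE1[OF Eue1] adjE1[OF Ee1w11] not_sym[OF n_u_x] n_u_e1 not_sym[OF n_e1_x] disjI2[OF n_w11_x] disjI1[OF not_sym[OF n_u_p3]] disjI1[OF not_sym[OF n_e1_p3]]]])
  have n_w11_s: "w11 \<noteq> s" by (rule quad[OF adjE2[OF Ee1w11] adjE2[OF Eue1] adjA[OF Auv] adjA[OF Avs] not_sym[OF n_u_e1] n_u_v n_e1_v disjI1[OF not_sym[OF n_e1_w11]] disjI1[OF g_w11_u] disjI1[OF n_w11_v]])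
  have n_w11_t: "w11 \<noteq> t" by (rule not_sym[OF quad[OF adjA[OF Atx] adjA[OF Axu] adjE1[OF Eue1] adjE1[OF Ee1w11] not_sym[OF n_u_x] n_u_e1 not_sym[OF n_e1_x] disjI2[OF n_w11_x] disjI1[OF not_sym[OF n_u_t]] disjI1[OF not_sym[OF n_e1_t]]]])
  have n_w12_w21: "w12 \<noteq> w21" by (rule quad[OF adjE2[OF Ee1w12] adjE2[OF Eue1] adjE1[OF Eue2] adjE1[OF Ee2w21] not_sym[OF n_u_e1] n_u_e2 g_e1_e2 disjI1[OF not_sym[OF n_e1_w12]] disjI1[OF g_w12_u] disjI1[OF not_sym[OF n_e2_w12]]])
  have n_w12_w22: "w12 \<noteq> w22" by (rule quad[OF adjE2[OF Ee1w12] adjE2[OF Eue1] adjE1[OF Eue2] adjE1[OF Ee2w22] not_sym[OF n_u_e1] n_u_e2 g_e1_e2 disjI1[OF not_sym[OF n_e1_w12]] disjI1[OF g_w12_u] disjI1[OF not_sym[OF n_e2_w12]]])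
  have n_w12_w31: "w12 \<noteq> w31" by (rule quad[OF adjE2[OF Ee1w12] adjE2[OF Eue1] adjE1[OF Eue3] adjE1[OF Ee3w31] not_sym[OF n_u_e1] n_u_e3 g_e1_e3 disjI1[OF not_sym[OF n_e1_w12]] disjI1[OF g_w12_u] disjI1[OF not_sym[OF n_e3_w12]]])
  have n_w12_w32: "w12 \<noteq> w32" by (rule quad[OF adjE2[OF Ee1w12] adjE2[OF Eue1] adjE1[OF Eue3] adjE1[OF Ee3w32] not_sym[OF n_u_e1] n_u_e3 g_e1_e3 disjI1[OF not_sym[OF n_e1_w12]] disjI1[OF g_w12_u] disjI1[OF not_sym[OF n_e3_w12]]])
  have n_w12_v: "w12 \<noteq> v" by (rule tri[OF adjE2[OF Ee1w12] adjE2[OF Eue1] adjA[OF Auv] not_sym[OF n_u_e1] disjI1[OF not_sym[OF n_e1_w12]] disjI1[OF g_w12_u]])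
  have n_w12_y1: "w12 \<noteq> y1" by (rule quad[OF adjE2[OF Ee1w12] adjE2[OF Eue1] adjA[OF Auv] adjE1[OF Evy1] not_sym[OF n_u_e1] n_u_v n_e1_v disjI1[OF not_sym[OF n_e1_w12]] disjI1[OF g_w12_u] disjI1[OF n_w12_v]])
  have n_w12_y2: "w12 \<noteq> y2" by (rule quad[OF adjE2[OF Ee1w12] adjE2[OF Eue1] adjA[OF Auv] adjE1[OF Evy2] not_sym[OF n_u_e1] n_u_v n_e1_v disjI1[OF not_sym[OF n_e1_w12]] disjI1[OF g_w12_u] disjI1[OF n_w12_v]])
  have n_w12_y3: "w12 \<noteq> y3" by (rule quad[OF adjE2[OF Ee1w12] adjE2[OF Eue1] adjA[OF Auv] adjE1[OF Evy3] not_sym[OF n_u_e1] n_u_v n_e1_v disjI1[OF not_sym[OF n_e1_w12]] disjI1[OF g_w12_u] disjI1[OF n_w12_v]])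
  have n_w12_x: "w12 \<noteq> x" by (rule not_sym[OF tri[OF adjA[OF Axu] adjE1[OF Eue1] adjE1[OF Ee1w12] n_u_e1 disjI1[OF not_sym[OF n_u_x]] disjI1[OF not_sym[OF n_e1_x]]]])
  have n_w12_p1: "w12 \<noteq> p1" by (rule not_sym[OF quad[OF adjE2[OF Exp1] adjA[OF Axu] adjE1[OF Eue1] adjE1[OF Ee1w12] not_sym[OF n_u_x] n_u_e1 not_sym[OF n_e1_x] disjI2[OF n_w12_x] disjI1[OF not_sym[OF n_u_p1]] disjI1[OF not_sym[OF n_e1_p1]]]])
  have n_w12_p2: "w12 \<noteq> p2" by (rule not_sym[OF quad[OF adjE2[OF Exp2] adjA[OF Axu] adjE1[OF Eue1] adjE1[OF Ee1w12] not_sym[OF n_u_x] n_u_e1 not_sym[OF n_e1_x] disjI2[OF n_w12_x] disjI1[OF not_sym[OF n_u_p2]] disjI1[OF not_sym[OF n_e1_p2]]]])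
  have n_w12_p3: "w12 \<noteq> p3" by (rule not_sym[OF quad[OF adjE2[OF Exp3] adjA[OF Axu] adjE1[OF Eue1] adjE1[OF Ee1w12] not_sym[OF n_u_x] n_u_e1 not_sym[OF n_e1_x] disjI2[OF n_w12_x] disjI1[OF not_sym[OF n_u_p3]] disjI1[OF not_sym[OF n_e1_p3]]]])
  have n_w12_s: "w12 \<noteq> s" by (rule quad[OF adjE2[OF Ee1w12] adjE2[OF Eue1] adjA[OF Auv] adjA[OF Avs] not_sym[OF n_u_e1] n_u_v n_e1_v disjI1[OF not_sym[OF n_e1_w12]] disjI1[OF g_w12_u] disjI1[OF n_w12_v]])
  have n_w12_t: "w12 \<noteq> t" by (rule not_sym[OF quad[OF adjA[OF Atx] adjA[OF Axu] adjE1[OF Eue1] adjE1[OF Ee1w12] not_sym[OF n_u_x] n_u_e1 not_sym[OF n_e1_x] disjI2[OF n_w12_x] disjI1[OF not_sym[OF n_u_t]] disjI1[OF not_sym[OF n_e1_t]]]])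
  have n_w21_w31: "w21 \<noteq> w31" by (rule quad[OF adjE2[OF Ee2w21] adjE2[OF Eue2] adjE1[OF Eue3] adjE1[OF Ee3w31] not_sym[OF n_u_e2] n_u_e3 g_e2_e3 disjI1[OF not_sym[OF n_e2_w21]] disjI1[OF g_w21_u] disjI1[OF not_sym[OF n_e3_w21]]])
  have n_w21_w32: "w21 \<noteq> w32" by (rule quad[OF adjE2[OF Ee2w21] adjE2[OF Eue2] adjE1[OF Eue3] adjE1[OF Ee3w32] not_sym[OF n_u_e2] n_u_e3 g_e2_e3 disjI1[OF not_sym[OF n_e2_w21]] disjI1[OF g_w21_u] disjI1[OF not_sym[OF n_e3_w21]]])
  have n_w21_v: "w21 \<noteq> v" by (rule tri[OF adjE2[OF Ee2w21] adjE2[OF Eue2] adjA[OF Auv] not_sym[OF n_u_e2] disjI1[OF not_sym[OF n_e2_w21]] disjI1[OF g_w21_u]])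
  have n_w21_y1: "w21 \<noteq> y1" by (rule quad[OF adjE2[OF Ee2w21] adjE2[OF Eue2] adjA[OF Auv] adjE1[OF Evy1] not_sym[OF n_u_e2] n_u_v n_e2_v disjI1[OF not_sym[OF n_e2_w21]] disjI1[OF g_w21_u] disjI1[OF n_w21_v]])
  have n_w21_y2: "w21 \<noteq> y2" by (rule quad[OF adjE2[OF Ee2w21] adjE2[OF Eue2] adjA[OF Auv] adjE1[OF Evy2] not_sym[OF n_u_e2] n_u_v n_e2_v disjI1[OF not_sym[OF n_e2_w21]] disjI1[OF g_w21_u] disjI1[OF n_w21_v]])
  have n_w21_y3: "w21 \<noteq> y3" by (rule quad[OF adjE2[OF Ee2w21] adjE2[OF Eue2] adjA[OF Auv] adjE1[OF Evy3] not_sym[OF n_u_e2] n_u_v n_e2_v disjI1[OF not_sym[OF n_e2_w21]] disjI1[OF g_w21_u] disjI1[OF n_w21_v]])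
  have n_w21_x: "w21 \<noteq> x" by (rule not_sym[OF tri[OF adjA[OF Axu] adjE1[OF Eue2] adjE1[OF Ee2w21] n_u_e2 disjI1[OF not_sym[OF n_u_x]] disjI1[OF not_sym[OF n_e2_x]]]])
  have n_w21_p1: "w21 \<noteq> p1" by (rule not_sym[OF quad[OF adjE2[OF Exp1] adjA[OF Axu] adjE1[OF Eue2] adjE1[OF Ee2w21] not_sym[OF n_u_x] n_u_e2 not_sym[OF n_e2_x] disjI2[OF n_w21_x] disjI1[OF not_sym[OF n_u_p1]] disjI1[OF not_sym[OF n_e2_p1]]]])
  have n_w21_p2: "w21 \<noteq> p2" by (rule not_sym[OF quad[OF adjE2[OF Exp2] adjA[OF Axu] adjE1[OF Eue2] adjE1[OF Ee2w21] not_sym[OF n_u_x] n_u_e2 not_sym[OF n_e2_x] disjI2[OF n_w21_x] disjI1[OF not_sym[OF n_u_p2]] disjI1[OF not_sym[OF n_e2_p2]]]])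
  have n_w21_p3: "w21 \<noteq> p3" by (rule not_sym[OF quad[OF adjE2[OF Exp3] adjA[OF Axu] adjE1[OF Eue2] adjE1[OF Ee2w21] not_sym[OF n_u_x] n_u_e2 not_sym[OF n_e2_x] disjI2[OF n_w21_x] disjI1[OF not_sym[OF n_u_p3]] disjI1[OF not_sym[OF n_e2_p3]]]])
  have n_w21_s: "w21 \<noteq> s" by (rule quad[OF adjE2[OF Ee2w21] adjE2[OF Eue2] adjA[OF Auv] adjA[OF Avs] not_sym[OF n_u_e2] n_u_v n_e2_v disjI1[OF not_sym[OF n_e2_w21]] disjI1[OF g_w21_u] disjI1[OF n_w21_v]])
  have n_w21_t: "w21 \<noteq> t" by (rule not_sym[OF quad[OF adjA[OF Atx] adjA[OF Axu] adjE1[OF Eue2] adjE1[OF Ee2w21] not_sym[OF n_u_x] n_u_e2 not_sym[OF n_e2_x] disjI2[OF n_w21_x] disjI1[OF not_sym[OF n_u_t]] disjI1[OF not_sym[OF n_e2_t]]]])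
  have n_w22_w31: "w22 \<noteq> w31" by (rule quad[OF adjE2[OF Ee2w22] adjE2[OF Eue2] adjE1[OF Eue3] adjE1[OF Ee3w31] not_sym[OF n_u_e2] n_u_e3 g_e2_e3 disjI1[OF not_sym[OF n_e2_w22]] disjI1[OF g_w22_u] disjI1[OF not_sym[OF n_e3_w22]]])
  have n_w22_w32: "w22 \<noteq> w32" by (rule quad[OF adjE2[OF Ee2w22] adjE2[OF Eue2] adjE1[OF Eue3] adjE1[OF Ee3w32] not_sym[OF n_u_e2] n_u_e3 g_e2_e3 disjI1[OF not_sym[OF n_e2_w22]] disjI1[OF g_w22_u] disjI1[OF not_sym[OF n_e3_w22]]])
  have n_w22_v: "w22 \<noteq> v" by (rule tri[OF adjE2[OF Ee2w22] adjE2[OF Eue2] adjA[OF Auv] not_sym[OF n_u_e2] disjI1[OF not_sym[OF n_e2_w22]] disjI1[OF g_w22_u]])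
  have n_w22_y1: "w22 \<noteq> y1" by (rule quad[OF adjE2[OF Ee2w22] adjE2[OF Eue2] adjA[OF Auv] adjE1[OF Evy1] not_sym[OF n_u_e2] n_u_v n_e2_v disjI1[OF not_sym[OF n_e2_w22]] disjI1[OF g_w22_u] disjI1[OF n_w22_v]])
  have n_w22_y2: "w22 \<noteq> y2" by (rule quad[OF adjE2[OF Ee2w22] adjE2[OF Eue2] adjA[OF Auv] adjE1[OF Evy2] not_sym[OF n_u_e2] n_u_v n_e2_v disjI1[OF not_sym[OF n_e2_w22]] disjI1[OF g_w22_u] disjI1[OF n_w22_v]])
  have n_w22_y3: "w22 \<noteq> y3" by (rule quad[OF adjE2[OF Ee2w22] adjE2[OF Eue2] adjA[OF Auv] adjE1[OF Evy3] not_sym[OF n_u_e2] n_u_v n_e2_v disjI1[OF not_sym[OF n_e2_w22]] disjI1[OF g_w22_u] disjI1[OF n_w22_v]])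
  have n_w22_x: "w22 \<noteq> x" by (rule not_sym[OF tri[OF adjA[OF Axu] adjE1[OF Eue2] adjE1[OF Ee2w22] n_u_e2 disjI1[OF not_sym[OF n_u_x]] disjI1[OF not_sym[OF n_e2_x]]]])
  have n_w22_p1: "w22 \<noteq> p1" by (rule not_sym[OF quad[OF adjE2[OF Exp1] adjA[OF Axu] adjE1[OF Eue2] adjE1[OF Ee2w22] not_sym[OF n_u_x] n_u_e2 not_sym[OF n_e2_x] disjI2[OF n_w22_x] disjI1[OF not_sym[OF n_u_p1]] disjI1[OF not_sym[OF n_e2_p1]]]])
  have n_w22_p2: "w22 \<noteq> p2" by (rule not_sym[OF quad[OF adjE2[OF Exp2] adjA[OF Axu] adjE1[OF Eue2] adjE1[OF Ee2w22] not_sym[OF n_u_x] n_u_e2 not_sym[OF n_e2_x] disjI2[OF n_w22_x] disjI1[OF not_sym[OF n_u_p2]] disjI1[OF not_sym[OF n_e2_p2]]]])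
  have n_w22_p3: "w22 \<noteq> p3" by (rule not_sym[OF quad[OF adjE2[OF Exp3] adjA[OF Axu] adjE1[OF Eue2] adjE1[OF Ee2w22] not_sym[OF n_u_x] n_u_e2 not_sym[OF n_e2_x] disjI2[OF n_w22_x] disjI1[OF not_sym[OF n_u_p3]] disjI1[OF not_sym[OF n_e2_p3]]]])
  have n_w22_s: "w22 \<noteq> s" by (rule quad[OF adjE2[OF Ee2w22] adjE2[OF Eue2] adjA[OF Auv] adjA[OF Avs] not_sym[OF n_u_e2] n_u_v n_e2_v disjI1[OF not_sym[OF n_e2_w22]] disjI1[OF g_w22_u] disjI1[OF n_w22_v]])
  have n_w22_t: "w22 \<noteq> t" by (rule not_sym[OF quad[OF adjA[OF Atx] adjA[OF Axu] adjE1[OF Eue2] adjE1[OF Ee2w22] not_sym[OF n_u_x] n_u_e2 not_sym[OF n_e2_x] disjI2[OF n_w22_x] disjI1[OF not_sym[OF n_u_t]] disjI1[OF not_sym[OF n_e2_t]]]])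
  have n_w31_v: "w31 \<noteq> v" by (rule tri[OF adjE2[OF Ee3w31] adjE2[OF Eue3] adjA[OF Auv] not_sym[OF n_u_e3] disjI1[OF not_sym[OF n_e3_w31]] disjI1[OF g_w31_u]])
  have n_w31_y1: "w31 \<noteq> y1" by (rule quad[OF adjE2[OF Ee3w31] adjE2[OF Eue3] adjA[OF Auv] adjE1[OF Evy1] not_sym[OF n_u_e3] n_u_v n_e3_v disjI1[OF not_sym[OF n_e3_w31]] disjI1[OF g_w31_u] disjI1[OF n_w31_v]])
  have n_w31_y2: "w31 \<noteq> y2" by (rule quad[OF adjE2[OF Ee3w31] adjE2[OF Eue3] adjA[OF Auv] adjE1[OF Evy2] not_sym[OF n_u_e3] n_u_v n_e3_v disjI1[OF not_sym[OF n_e3_w31]] disjI1[OF g_w31_u] disjI1[OF n_w31_v]])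
  have n_w31_y3: "w31 \<noteq> y3" by (rule quad[OF adjE2[OF Ee3w31] adjE2[OF Eue3] adjA[OF Auv] adjE1[OF Evy3] not_sym[OF n_u_e3] n_u_v n_e3_v disjI1[OF not_sym[OF n_e3_w31]] disjI1[OF g_w31_u] disjI1[OF n_w31_v]])
  have n_w31_x: "w31 \<noteq> x" by (rule not_sym[OF tri[OF adjA[OF Axu] adjE1[OF Eue3] adjE1[OF Ee3w31] n_u_e3 disjI1[OF not_sym[OF n_u_x]] disjI1[OF not_sym[OF n_e3_x]]]])
  have n_w31_p1: "w31 \<noteq> p1" by (rule not_sym[OF quad[OF adjE2[OF Exp1] adjA[OF Axu] adjE1[OF Eue3] adjE1[OF Ee3w31] not_sym[OF n_u_x] n_u_e3 not_sym[OF n_e3_x] disjI2[OF n_w31_x] disjI1[OF not_sym[OF n_u_p1]] disjI1[OF not_sym[OF n_e3_p1]]]])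
  have n_w31_p2: "w31 \<noteq> p2" by (rule not_sym[OF quad[OF adjE2[OF Exp2] adjA[OF Axu] adjE1[OF Eue3] adjE1[OF Ee3w31] not_sym[OF n_u_x] n_u_e3 not_sym[OF n_e3_x] disjI2[OF n_w31_x] disjI1[OF not_sym[OF n_u_p2]] disjI1[OF not_sym[OF n_e3_p2]]]])
  have n_w31_p3: "w31 \<noteq> p3" by (rule not_sym[OF quad[OF adjE2[OF Exp3] adjA[OF Axu] adjE1[OF Eue3] adjE1[OF Ee3w31] not_sym[OF n_u_x] n_u_e3 not_sym[OF n_e3_x] disjI2[OF n_w31_x] disjI1[OF not_sym[OF n_u_p3]] disjI1[OF not_sym[OF n_e3_p3]]]])
  have n_w31_s: "w31 \<noteq> s" by (rule quad[OF adjE2[OF Ee3w31] adjE2[OF Eue3] adjA[OF Auv] adjA[OF Avs] not_sym[OF n_u_e3] n_u_v n_e3_v disjI1[OF not_sym[OF n_e3_w31]] disjI1[OF g_w31_u] disjI1[OF n_w31_v]])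
  have n_w31_t: "w31 \<noteq> t" by (rule not_sym[OF quad[OF adjA[OF Atx] adjA[OF Axu] adjE1[OF Eue3] adjE1[OF Ee3w31] not_sym[OF n_u_x] n_u_e3 not_sym[OF n_e3_x] disjI2[OF n_w31_x] disjI1[OF not_sym[OF n_u_t]] disjI1[OF not_sym[OF n_e3_t]]]])
  have n_w32_v: "w32 \<noteq> v" by (rule tri[OF adjE2[OF Ee3w32] adjE2[OF Eue3] adjA[OF Auv] not_sym[OF n_u_e3] disjI1[OF not_sym[OF n_e3_w32]] disjI1[OF g_w32_u]])
  have n_w32_y1: "w32 \<noteq> y1" by (rule quad[OF adjE2[OF Ee3w32] adjE2[OF Eue3] adjA[OF Auv] adjE1[OF Evy1] not_sym[OF n_u_e3] n_u_v n_e3_v disjI1[OF not_sym[OF n_e3_w32]] disjI1[OF g_w32_u] disjI1[OF n_w32_v]])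
  have n_w32_y2: "w32 \<noteq> y2" by (rule quad[OF adjE2[OF Ee3w32] adjE2[OF Eue3] adjA[OF Auv] adjE1[OF Evy2] not_sym[OF n_u_e3] n_u_v n_e3_v disjI1[OF not_sym[OF n_e3_w32]] disjI1[OF g_w32_u] disjI1[OF n_w32_v]])
  have n_w32_y3: "w32 \<noteq> y3" by (rule quad[OF adjE2[OF Ee3w32] adjE2[OF Eue3] adjA[OF Auv] adjE1[OF Evy3] not_sym[OF n_u_e3] n_u_v n_e3_v disjI1[OF not_sym[OF n_e3_w32]] disjI1[OF g_w32_u] disjI1[OF n_w32_v]])
  have n_w32_x: "w32 \<noteq> x" by (rule not_sym[OF tri[OF adjA[OF Axu] adjE1[OF Eue3] adjE1[OF Ee3w32] n_u_e3 disjI1[OF not_sym[OF n_u_x]] disjI1[OF not_sym[OF n_e3_x]]]])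
  have n_w32_p1: "w32 \<noteq> p1" by (rule not_sym[OF quad[OF adjE2[OF Exp1] adjA[OF Axu] adjE1[OF Eue3] adjE1[OF Ee3w32] not_sym[OF n_u_x] n_u_e3 not_sym[OF n_e3_x] disjI2[OF n_w32_x] disjI1[OF not_sym[OF n_u_p1]] disjI1[OF not_sym[OF n_e3_p1]]]])
  have n_w32_p2: "w32 \<noteq> p2" by (rule not_sym[OF quad[OF adjE2[OF Exp2] adjA[OF Axu] adjE1[OF Eue3] adjE1[OF Ee3w32] not_sym[OF n_u_x] n_u_e3 not_sym[OF n_e3_x] disjI2[OF n_w32_x] disjI1[OF not_sym[OF n_u_p2]] disjI1[OF not_sym[OF n_e3_p2]]]])
  have n_w32_p3: "w32 \<noteq> p3" by (rule not_sym[OF quad[OF adjE2[OF Exp3] adjA[OF Axu] adjE1[OF Eue3] adjE1[OF Ee3w32] not_sym[OF n_u_x] n_u_e3 not_sym[OF n_e3_x] disjI2[OF n_w32_x] disjI1[OF not_sym[OF n_u_p3]] disjI1[OF not_sym[OF n_e3_p3]]]])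
  have n_w32_s: "w32 \<noteq> s" by (rule quad[OF adjE2[OF Ee3w32] adjE2[OF Eue3] adjA[OF Auv] adjA[OF Avs] not_sym[OF n_u_e3] n_u_v n_e3_v disjI1[OF not_sym[OF n_e3_w32]] disjI1[OF g_w32_u] disjI1[OF n_w32_v]])
  have n_w32_t: "w32 \<noteq> t" by (rule not_sym[OF quad[OF adjA[OF Atx] adjA[OF Axu] adjE1[OF Eue3] adjE1[OF Ee3w32] not_sym[OF n_u_x] n_u_e3 not_sym[OF n_e3_x] disjI2[OF n_w32_x] disjI1[OF not_sym[OF n_u_t]] disjI1[OF not_sym[OF n_e3_t]]]])
  have n_v_y1: "v \<noteq> y1" by (rule neE[OF Evy1])
  have n_v_y2: "v \<noteq> y2" by (rule neE[OF Evy2])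
  have n_v_y3: "v \<noteq> y3" by (rule neE[OF Evy3])
  have n_v_x: "v \<noteq> x" by (rule inu[OF Auv Atx n_u_t])
  have n_v_p1: "v \<noteq> p1" by (rule not_sym[OF tri[OF adjE2[OF Exp1] adjA[OF Axu] adjA[OF Auv] not_sym[OF n_u_x] disjI2[OF n_v_x] disjI1[OF not_sym[OF n_u_p1]]]])
  have n_v_p2: "v \<noteq> p2" by (rule not_sym[OF tri[OF adjE2[OF Exp2] adjA[OF Axu] adjA[OF Auv] not_sym[OF n_u_x] disjI2[OF n_v_x] disjI1[OF not_sym[OF n_u_p2]]]])
  have n_v_p3: "v \<noteq> p3" by (rule not_sym[OF tri[OF adjE2[OF Exp3] adjA[OF Axu] adjA[OF Auv] not_sym[OF n_u_x] disjI2[OF n_v_x] disjI1[OF not_sym[OF n_u_p3]]]])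
  have n_v_s: "v \<noteq> s" by (rule neA[OF Avs])
  have n_v_t: "v \<noteq> t" by (rule not_sym[OF tri[OF adjA[OF Atx] adjA[OF Axu] adjA[OF Auv] not_sym[OF n_u_x] disjI2[OF n_v_x] disjI1[OF not_sym[OF n_u_t]]]])
  have n_y1_x: "y1 \<noteq> x" by (rule not_sym[OF tri[OF adjA[OF Axu] adjA[OF Auv] adjE1[OF Evy1] n_u_v disjI1[OF not_sym[OF n_u_x]] disjI1[OF not_sym[OF n_v_x]]]])
  have n_y1_p1: "y1 \<noteq> p1" by (rule not_sym[OF quad[OF adjE2[OF Exp1] adjA[OF Axu] adjA[OF Auv] adjE1[OF Evy1] not_sym[OF n_u_x] n_u_v not_sym[OF n_v_x] disjI2[OF n_y1_x] disjI1[OF not_sym[OF n_u_p1]] disjI1[OF not_sym[OF n_v_p1]]]])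
  have n_y1_p2: "y1 \<noteq> p2" by (rule not_sym[OF quad[OF adjE2[OF Exp2] adjA[OF Axu] adjA[OF Auv] adjE1[OF Evy1] not_sym[OF n_u_x] n_u_v not_sym[OF n_v_x] disjI2[OF n_y1_x] disjI1[OF not_sym[OF n_u_p2]] disjI1[OF not_sym[OF n_v_p2]]]])
  have n_y1_p3: "y1 \<noteq> p3" by (rule not_sym[OF quad[OF adjE2[OF Exp3] adjA[OF Axu] adjA[OF Auv] adjE1[OF Evy1] not_sym[OF n_u_x] n_u_v not_sym[OF n_v_x] disjI2[OF n_y1_x] disjI1[OF not_sym[OF n_u_p3]] disjI1[OF not_sym[OF n_v_p3]]]])
  have n_y1_s: "y1 \<noteq> s" by (rule not_sym[OF ae2[OF Avs E_flip[OF Evy1]]])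
  have n_y1_t: "y1 \<noteq> t" by (rule not_sym[OF quad[OF adjA[OF Atx] adjA[OF Axu] adjA[OF Auv] adjE1[OF Evy1] not_sym[OF n_u_x] n_u_v not_sym[OF n_v_x] disjI2[OF n_y1_x] disjI1[OF not_sym[OF n_u_t]] disjI1[OF not_sym[OF n_v_t]]]])
  have n_y2_x: "y2 \<noteq> x" by (rule not_sym[OF tri[OF adjA[OF Axu] adjA[OF Auv] adjE1[OF Evy2] n_u_v disjI1[OF not_sym[OF n_u_x]] disjI1[OF not_sym[OF n_v_x]]]])
  have n_y2_p1: "y2 \<noteq> p1" by (rule not_sym[OF quad[OF adjE2[OF Exp1] adjA[OF Axu] adjA[OF Auv] adjE1[OF Evy2] not_sym[OF n_u_x] n_u_v not_sym[OF n_v_x] disjI2[OF n_y2_x] disjI1[OF not_sym[OF n_u_p1]] disjI1[OF not_sym[OF n_v_p1]]]])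
  have n_y2_p2: "y2 \<noteq> p2" by (rule not_sym[OF quad[OF adjE2[OF Exp2] adjA[OF Axu] adjA[OF Auv] adjE1[OF Evy2] not_sym[OF n_u_x] n_u_v not_sym[OF n_v_x] disjI2[OF n_y2_x] disjI1[OF not_sym[OF n_u_p2]] disjI1[OF not_sym[OF n_v_p2]]]])
  have n_y2_p3: "y2 \<noteq> p3" by (rule not_sym[OF quad[OF adjE2[OF Exp3] adjA[OF Axu] adjA[OF Auv] adjE1[OF Evy2] not_sym[OF n_u_x] n_u_v not_sym[OF n_v_x] disjI2[OF n_y2_x] disjI1[OF not_sym[OF n_u_p3]] disjI1[OF not_sym[OF n_v_p3]]]])
  have n_y2_s: "y2 \<noteq> s" by (rule not_sym[OF ae2[OF Avs E_flip[OF Evy2]]])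
  have n_y2_t: "y2 \<noteq> t" by (rule not_sym[OF quad[OF adjA[OF Atx] adjA[OF Axu] adjA[OF Auv] adjE1[OF Evy2] not_sym[OF n_u_x] n_u_v not_sym[OF n_v_x] disjI2[OF n_y2_x] disjI1[OF not_sym[OF n_u_t]] disjI1[OF not_sym[OF n_v_t]]]])
  have n_y3_x: "y3 \<noteq> x" by (rule not_sym[OF tri[OF adjA[OF Axu] adjA[OF Auv] adjE1[OF Evy3] n_u_v disjI1[OF not_sym[OF n_u_x]] disjI1[OF not_sym[OF n_v_x]]]])
  have n_y3_p1: "y3 \<noteq> p1" by (rule not_sym[OF quad[OF adjE2[OF Exp1] adjA[OF Axu] adjA[OF Auv] adjE1[OF Evy3] not_sym[OF n_u_x] n_u_v not_sym[OF n_v_x] disjI2[OF n_y3_x] disjI1[OF not_sym[OF n_u_p1]] disjI1[OF not_sym[OF n_v_p1]]]])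
  have n_y3_p2: "y3 \<noteq> p2" by (rule not_sym[OF quad[OF adjE2[OF Exp2] adjA[OF Axu] adjA[OF Auv] adjE1[OF Evy3] not_sym[OF n_u_x] n_u_v not_sym[OF n_v_x] disjI2[OF n_y3_x] disjI1[OF not_sym[OF n_u_p2]] disjI1[OF not_sym[OF n_v_p2]]]])
  have n_y3_p3: "y3 \<noteq> p3" by (rule not_sym[OF quad[OF adjE2[OF Exp3] adjA[OF Axu] adjA[OF Auv] adjE1[OF Evy3] not_sym[OF n_u_x] n_u_v not_sym[OF n_v_x] disjI2[OF n_y3_x] disjI1[OF not_sym[OF n_u_p3]] disjI1[OF not_sym[OF n_v_p3]]]])
  have n_y3_s: "y3 \<noteq> s" by (rule not_sym[OF ae2[OF Avs E_flip[OF Evy3]]])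
  have n_y3_t: "y3 \<noteq> t" by (rule not_sym[OF quad[OF adjA[OF Atx] adjA[OF Axu] adjA[OF Auv] adjE1[OF Evy3] not_sym[OF n_u_x] n_u_v not_sym[OF n_v_x] disjI2[OF n_y3_x] disjI1[OF not_sym[OF n_u_t]] disjI1[OF not_sym[OF n_v_t]]]])
  have n_x_p1: "x \<noteq> p1" by (rule neE[OF Exp1])
  have n_x_p2: "x \<noteq> p2" by (rule neE[OF Exp2])
  have n_x_p3: "x \<noteq> p3" by (rule neE[OF Exp3])
  have n_x_s: "x \<noteq> s" by (rule inu[OF Atx Avs not_sym[OF n_v_t]])
  have n_x_t: "x \<noteq> t" by (rule not_sym[OF neA[OF Atx]])
  have n_p1_s: "p1 \<noteq> s" by (rule quad[OF adjE2[OF Exp1] adjA[OF Axu] adjA[OF Auv] adjA[OF Avs] not_sym[OF n_u_x] n_u_v not_sym[OF n_v_x] disjI1[OF not_sym[OF n_x_p1]] disjI1[OF not_sym[OF n_u_p1]] disjI1[OF not_sym[OF n_v_p1]]])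
  have n_p1_t: "p1 \<noteq> t" by (rule not_sym[OF ae1[OF Atx E_flip[OF Exp1]]])
  have n_p2_s: "p2 \<noteq> s" by (rule quad[OF adjE2[OF Exp2] adjA[OF Axu] adjA[OF Auv] adjA[OF Avs] not_sym[OF n_u_x] n_u_v not_sym[OF n_v_x] disjI1[OF not_sym[OF n_x_p2]] disjI1[OF not_sym[OF n_u_p2]] disjI1[OF not_sym[OF n_v_p2]]])
  have n_p2_t: "p2 \<noteq> t" by (rule not_sym[OF ae1[OF Atx E_flip[OF Exp2]]])
  have n_p3_s: "p3 \<noteq> s" by (rule quad[OF adjE2[OF Exp3] adjA[OF Axu] adjA[OF Auv] adjA[OF Avs] not_sym[OF n_u_x] n_u_v not_sym[OF n_v_x] disjI1[OF not_sym[OF n_x_p3]] disjI1[OF not_sym[OF n_u_p3]] disjI1[OF not_sym[OF n_v_p3]]])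
  have n_p3_t: "p3 \<noteq> t" by (rule not_sym[OF ae1[OF Atx E_flip[OF Exp3]]])
  have n_s_t: "s \<noteq> t" by (rule not_sym[OF quad[OF adjA[OF Atx] adjA[OF Axu] adjA[OF Auv] adjA[OF Avs] not_sym[OF n_u_x] n_u_v not_sym[OF n_v_x] disjI1[OF not_sym[OF n_x_t]] disjI1[OF not_sym[OF n_u_t]] disjI1[OF not_sym[OF n_v_t]]]])
  note NE = g_e1_e2 g_e2_e3 g_e1_e3 g_y1_y2 g_y2_y3 g_y1_y3 g_p1_p2 g_p2_p3 g_p1_p3 g_w11_w12 g_w11_u g_w12_u g_w21_w22 g_w21_u g_w22_u g_w31_w32 g_w31_u g_w32_u n_u_e1 n_u_e2 n_u_e3 n_u_v n_u_y1 n_u_y2 n_u_y3 n_u_x n_u_p1 n_u_p2 n_u_p3 n_u_s n_u_t n_e1_w11 n_e1_w12 n_e1_w21 n_e1_w22 n_e1_w31 n_e1_w32 n_e1_v n_e1_y1 n_e1_y2 n_e1_y3 n_e1_x n_e1_p1 n_e1_p2 n_e1_p3 n_e1_s n_e1_t n_e2_w11 n_e2_w12 n_e2_w21 n_e2_w22 n_e2_w31 n_e2_w32 n_e2_v n_e2_y1 n_e2_y2 n_e2_y3 n_e2_x n_e2_p1 n_e2_p2 n_e2_p3 n_e2_s n_e2_t n_e3_w11 n_e3_w12 n_e3_w21 n_e3_w22 n_e3_w31 n_e3_w32 n_e3_v n_e3_y1 n_e3_y2 n_e3_y3 n_e3_x n_e3_p1 n_e3_p2 n_e3_p3 n_e3_s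 n_e3_t n_w11_w21 n_w11_w22 n_w11_w31 n_w11_w32 n_w11_v n_w11_y1 n_w11_y2 n_w11_y3 n_w11_x n_w11_p1 n_w11_p2 n_w11_p3 n_w11_s n_w11_t n_w12_w21 n_w12_w22 n_w12_w31 n_w12_w32 n_w12_v n_w12_y1 n_w12_y2 n_w12_y3 n_w12_x n_w12_p1 n_w12_p2 n_w12_p3 n_w12_s n_w12_t n_w21_w31 n_w21_w32 n_w21_v n_w21_y1 n_w21_y2 n_w21_y3 n_w21_x n_w21_p1 n_w21_p2 n_w21_p3 n_w21_s n_w21_t n_w22_w31 n_w22_w32 n_w22_v n_w22_y1 n_w22_y2 n_w22_y3 n_w22_x n_w22_p1 n_w22_p2 n_w22_p3 n_w22_s n_w22_t n_w31_v n_w31_y1 n_w31_y2 n_w31_y3 n_w31_x n_w31_p1 n_w31_p2 n_w31_p3 n_w31_s n_w31_t n_w32_v n_w32_y1 n_w32_y2 n_w32_y3 n_w32_x n_w32_p1 n_w32_p2 n_w32_p3 n_w32_s n_w32_t n_v_y1 n_v_y2 n_v_y3 n_v_x n_v_p1 n_v_p2 n_v_p3 n_v_s n_v_t n_y1_x n_y1_p1 n_y1_p2 n_y1_p3 n_y1_s n_y1_t n_y2_x n_y2_p1 n_y2_p2 n_y2_p3 n_y2_s n_y2_t n_y3_x n_y3_p1 n_y3_p2 n_y3_p3 n_y3_s n_y3_t n_x_p1 n_x_p2 n_x_p3 n_x_s n_x_t n_p1_s n_p1_t n_p2_s n_p2_t n_p3_s n_p3_t n_s_t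
  have D: "distinct [u,e1,e2,e3,w11,w12,w21,w22,w31,w32,v,y1,y2,y3,x,p1,p2,p3,s,t]" using NE NE[THEN not_sym] by simp
  have S: "set [u,e1,e2,e3,w11,w12,w21,w22,w31,w32,v,y1,y2,y3,x,p1,p2,p3,s,t] \<subseteq> V" using edgeV1[OF Eue1] edgeV2[OF Eue1] edgeV2[OF Eue2] edgeV2[OF Eue3] edgeV2[OF Ee1w11] edgeV2[OF Ee1w12] edgeV2[OF Ee2w21] edgeV2[OF Ee2w22] edgeV2[OF Ee3w31] edgeV2[OF Ee3w32] edgeV1[OF Evy1] edgeV2[OF Evy1] edgeV2[OF Evy2] edgeV2[OF Evy3] edgeV1[OF Exp1] edgeV2[OF Exp1] edgeV2[OF Exp2] edgeV2[OF Exp3] arcV2[OF Avs] arcV1[OF Atx] by simp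
  have "card (set [u,e1,e2,e3,w11,w12,w21,w22,w31,w32,v,y1,y2,y3,x,p1,p2,p3,s,t]) = 20" using distinct_card[OF D] by simp
  moreover have "card (set [u,e1,e2,e3,w11,w12,w21,w22,w31,w32,v,y1,y2,y3,x,p1,p2,p3,s,t]) \<le> card V"
    using S G_mg unfolding mixed_graph_def by (simp add: card_mono)
  ultimately show ?thesis by simp
qed

end



lemma u5: "[0..<5] = [0::nat,1,2,3,4]" by (simp add: upt_rec)
lemma all5: "(\<forall>i::nat<5. P i) \<longleftrightarrow> P 0 \<and> P 1 \<and> P 2 \<and> P 3 \<and> P 4"
  by (auto simp: less_Suc_eq eval_nat_numeral)

lemma cyc3_ex: assumes "has_cycle_of_length V E A 3"
  shows "\<exists>a b c. adj E A a b \<and> adj E A b c \<and> adj E A c a \<and> a \<noteq> b \<and> b \<noteq> c \<and> a \<noteq> c \<and> a \<in> V"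
proof -
  obtain vs bs where L: "length vs = 3" and dv: "distinct vs" and sv: "set vs \<subseteq> V"
    and st: "\<forall>i<3. if bs ! i then (vs ! i, vs ! ((i + 1) mod 3)) \<in> A else {vs ! i, vs ! ((i + 1) mod 3)} \<in> E"
    using assms unfolding has_cycle_of_length_def by blast
  have a: "\<And>i. i < 3 \<Longrightarrow> adj E A (vs ! i) (vs ! ((i + 1) mod 3))"
    using st unfolding adj_def by (metis (full_types))
  have "adj E A (vs!0) (vs!1)" using a[of 0] by simp
  moreover have "adj E A (vs!1) (vs!2)" using a[of 1] by (simp add: numeral_2_eq_2)
  moreover have "adj E A (vs!2) (vs!0)" using a[of 2] by simp
  moreover have "vs!0 \<noteq> vs!1" "vs!1 \<noteq> vs!2" "vs!0 \<noteq> vs!2" using dv L by (simp_all add: nth_eq_iff_index_eq)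
  moreover have "vs!0 \<in> V" using sv L by (metis nth_mem subsetD zero_less_numeral)
  ultimately show ?thesis by blast
qed

lemma cyc4_ex: assumes "has_cycle_of_length V E A 4"
  shows "\<exists>a b c d. adj E A a b \<and> adj E A b c \<and> adj E A c d \<and> adj E A d a \<and> a \<noteq> b \<and> b \<noteq> c \<and> a \<noteq> c
     \<and> a \<noteq> d \<and> b \<noteq> d \<and> c \<noteq> d \<and> a \<in> V"
proof -
  obtain vs bs where L: "length vs = 4" and dv: "distinct vs" and sv: "set vs \<subseteq> V"
    and st: "\<forall>i<4. if bs ! i then (vs ! i, vs ! ((i + 1) mod 4)) \<in> A else {vs ! i, vs ! ((i + 1) mod 4)} \<in> E"
    using assms unfolding has_cycle_of_length_def by blast
  have a: "\<And>i. i < 4 \<Longrightarrow> adj E A (vs ! i) (vs ! ((i + 1) mod 4))"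
    using st unfolding adj_def by (metis (full_types))
  have "adj E A (vs!0) (vs!1)" using a[of 0] by simp
  moreover have "adj E A (vs!1) (vs!2)" using a[of 1] by (simp add: numeral_2_eq_2)
  moreover have "adj E A (vs!2) (vs!3)" using a[of 2] by simp
  moreover have "adj E A (vs!3) (vs!0)" using a[of 3] by simp
  moreover have "vs!0 \<noteq> vs!1" "vs!1 \<noteq> vs!2" "vs!0 \<noteq> vs!2" "vs!0 \<noteq> vs!3" "vs!1 \<noteq> vs!3" "vs!2 \<noteq> vs!3"
    using dv L by (simp_all add: nth_eq_iff_index_eq)
  moreover have "vs!0 \<in> V" using sv L by (metis nth_mem subsetD zero_less_numeral)
  ultimately show ?thesis by blast
qed

definition el :: "(nat \<times> nat) list" where "el = [(0,15),(0,18),(0,22),(1,16),(1,19),(1,23),(2,12),(2,17),(2,20),(3,13),(3,18),(3,21),(4,14),(4,19),(4,22),(5,15),(5,20),(5,23),(6,12),(6,16),(6,21),(7,13),(7,17),(7,22),(8,14),(8,18),(8,23),(9,12),(9,15),(9,19),(10,13),(10,16),(10,20),(11,14),(11,17),(11,21)]"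
definition sl :: "nat list" where "sl = [11,0,1,2,3,4,5,6,7,8,9,10,23,12,13,14,15,16,17,18,19,20,21,22]"
definition nbt :: "nat list list" where "nbt = [[11,15,18,22],[0,16,19,23],[1,12,17,20],[2,13,18,21],[3,14,19,22],[4,15,20,23],[5,12,16,21],[6,13,17,22],[7,14,18,23],[8,12,15,19],[9,13,16,20],[10,14,17,21],[23,2,6,9],[12,3,7,10],[13,4,8,11],[14,0,5,9],[15,1,6,10],[16,2,7,11],[17,0,3,8],[18,1,4,9],[19,2,5,10],[20,3,6,11],[21,0,4,7],[22,1,5,8]]"
definition V0 :: "nat set" where "V0 = {0..<24}"
definition E0 :: "nat set set" where "E0 = (\<lambda>(a,b). {a,b}) ` set el"
definition A0 :: "(nat \<times> nat) set" where "A0 = {(a, sl ! a) | a. a < 24}"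

lemma chk_el: "list_all (\<lambda>(a,b). a < b \<and> b < 24 \<and> b \<in> set (nbt ! a) \<and> a \<in> set (nbt ! b)) el"
  unfolding el_def nbt_def by code_simp
lemma chk_sl: "list_all (\<lambda>a. sl ! a < 24 \<and> sl ! a \<noteq> a \<and> sl ! (sl ! a) \<noteq> a \<and> (a, sl ! a) \<notin> set el
   \<and> (sl ! a, a) \<notin> set el \<and> sl ! a \<in> set (nbt ! a)) [0..<24]"
  unfolding el_def sl_def nbt_def by code_simp
lemma chk_perm: "distinct sl \<and> length sl = 24 \<and> list_all (\<lambda>a. a \<in> set sl) [0..<24]"
  unfolding sl_def by code_simp
lemma chk_deg: "list_all (\<lambda>a. length (remdups (map snd (filter (\<lambda>p. fst p = a) el) @ map fst (filter (\<lambda>p. snd p = a) el))) = 3) [0..<24]"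
  unfolding el_def by code_simp
lemma chk3: "list_all (\<lambda>a. list_all (\<lambda>b. list_all (\<lambda>c. a \<in> set (nbt ! c) \<longrightarrow> a = b \<or> b = c \<or> a = c) (nbt ! b)) (nbt ! a)) [0..<24]"
  unfolding nbt_def by code_simp
lemma chk4: "list_all (\<lambda>a. list_all (\<lambda>b. list_all (\<lambda>c. list_all (\<lambda>d. a \<in> set (nbt ! d) \<longrightarrow>
   a = b \<or> b = c \<or> a = c \<or> a = d \<or> b = d \<or> c = d) (nbt ! c)) (nbt ! b)) (nbt ! a)) [0..<24]"
  unfolding nbt_def by code_simp

lemma card_edges_nbrs: assumes "mixed_graph V E A"
  shows "card {e\<in>E. a \<in> e} = card {b. {a,b} \<in> E}"
proof -
  have img: "{e\<in>E. a \<in> e} = (\<lambda>b. {a,b}) ` {b. {a,b} \<in> E}"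
  proof
    show "{e\<in>E. a \<in> e} \<subseteq> (\<lambda>b. {a,b}) ` {b. {a,b} \<in> E}"
    proof
      fix e assume e: "e \<in> {e\<in>E. a \<in> e}"
      then obtain p q where "e = {p,q}" using assms unfolding mixed_graph_def by blast
      moreover have "a = p \<or> a = q" using e \<open>e = {p,q}\<close> by auto
      ultimately show "e \<in> (\<lambda>b. {a,b}) ` {b. {a,b} \<in> E}"
      proof (elim disjE)
        assume "e = {p,q}" "a = p" then show ?thesis using e by auto
      next
        assume "e = {p,q}" "a = q" then have "e = {a,p}" by (simp add: insert_commute)
        then show ?thesis using e by auto
      qed
    qed
  qed auto
  have inj: "inj_on (\<lambda>b. {a,b}) {b. {a,b} \<in> E}"
    by (auto simp: inj_on_def doubleton_eq_iff)
  show ?thesis unfolding img card_image[OF inj] ..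
qed

lemma A0_iff: "(a,b) \<in> A0 \<longleftrightarrow> a < 24 \<and> b = sl ! a" by (auto simp: A0_def)
lemma E0_iff: "{a,b} \<in> E0 \<longleftrightarrow> (a,b) \<in> set el \<or> (b,a) \<in> set el"
  by (auto simp: E0_def doubleton_eq_iff)
lemma el_prop: "(p,q) \<in> set el \<Longrightarrow> p < q \<and> q < 24 \<and> q \<in> set (nbt ! p) \<and> p \<in> set (nbt ! q)"
  using chk_el by (auto simp: list_all_iff)
lemma sl_prop: "a < 24 \<Longrightarrow> sl ! a < 24 \<and> sl ! a \<noteq> a \<and> sl ! (sl ! a) \<noteq> a \<and> (a, sl ! a) \<notin> set el
   \<and> (sl ! a, a) \<notin> set el \<and> sl ! a \<in> set (nbt ! a)"
  using chk_sl by (auto simp: list_all_iff)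

lemma mg0: "mixed_graph V0 E0 A0"
  unfolding mixed_graph_def
proof (intro conjI allI impI ballI)
  show "finite V0" by (simp add: V0_def)
next
  fix e assume "e \<in> E0"
  then obtain p q where "(p,q) \<in> set el" "e = {p,q}" by (auto simp: E0_def)
  then show "\<exists>u v. u \<in> V0 \<and> v \<in> V0 \<and> u \<noteq> v \<and> e = {u, v}"
  proof (intro exI conjI)
    show "p \<in> V0" "q \<in> V0" "p \<noteq> q" using el_prop[of p q] \<open>(p,q) \<in> set el\<close> by (auto simp: V0_def)
  qed blast
next
  show "A0 \<subseteq> V0 \<times> V0" using sl_prop by (auto simp: A0_def V0_def)
next
  fix u show "(u,u) \<notin> A0" using sl_prop[of u] by (auto simp: A0_iff)
next
  fix u v assume "(u,v) \<in> A0"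
  then have "u < 24" "v = sl ! u" by (auto simp: A0_iff)
  then show "(v,u) \<notin> A0" "{u,v} \<notin> E0" using sl_prop[of u] by (auto simp: A0_iff E0_iff)
qed

lemma adj0: assumes "adj E0 A0 a b" shows "b \<in> set (nbt ! a)"
proof -
  have "(a < 24 \<and> b = sl ! a) \<or> (a,b) \<in> set el \<or> (b,a) \<in> set el"
    using assms unfolding adj_def A0_iff E0_iff .
  then show ?thesis
  proof (elim disjE)
    assume "a < 24 \<and> b = sl ! a" then show ?thesis using sl_prop[of a] by simp
  next
    assume "(a,b) \<in> set el" then show ?thesis using el_prop[of a b] by simp
  next
    assume "(b,a) \<in> set el" then show ?thesis using el_prop[of b a] by simp
  qed
qed

lemma out0: "u < 24 \<Longrightarrow> card {v. (u, v) \<in> A0} = 1"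
proof -
  assume u: "u < 24"
  have "{v. (u, v) \<in> A0} = {sl ! u}" using u by (auto simp: A0_iff)
  then show ?thesis by simp
qed

lemma in0: "u < 24 \<Longrightarrow> card {v. (v, u) \<in> A0} = 1"
proof -
  assume u: "u < 24"
  have uu: "u \<in> set [0..<24]" using u by simp
  have ds: "distinct sl" using chk_perm by (rule conjunct1)
  have ls: "length sl = 24" using chk_perm by (metis conjunct1 conjunct2)
  have us: "u \<in> set sl" using chk_perm[THEN conjunct2, THEN conjunct2] uu unfolding list_all_iff by blast
  from distinct_Ex1[OF ds us] obtain i where i1: "i < length sl \<and> sl ! i = u"
    and i2: "\<forall>j. j < length sl \<and> sl ! j = u \<longrightarrow> j = i" by (elim ex1E) blast
  have "{v. (v, u) \<in> A0} \<subseteq> {i}"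
  proof
    fix v assume "v \<in> {v. (v, u) \<in> A0}"
    then have "v < 24" "u = sl ! v" unfolding A0_iff by auto
    then show "v \<in> {i}" using i2 ls by auto
  qed
  moreover have "i \<in> {v. (v, u) \<in> A0}" using i1 ls unfolding A0_iff by auto
  ultimately have "{v. (v, u) \<in> A0} = {i}" by blast
  then show ?thesis by simp
qed



lemma edeg0: "u < 24 \<Longrightarrow> card {e \<in> E0. u \<in> e} = 3"
proof -
  assume u: "u < 24"
  have uu: "u \<in> set [0..<24]" using u by simp
  let ?l = "map snd (filter (\<lambda>p. fst p = u) el) @ map fst (filter (\<lambda>p. snd p = u) el)"
  have "{b. {u,b} \<in> E0} = set ?l"
    unfolding E0_iff by (auto simp: image_iff)
  moreover have "length (remdups ?l) = 3"
    using chk_deg uu unfolding list_all_iff by blast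
  ultimately have "card {b. {u,b} \<in> E0} = 3" by (simp add: length_remdups_card_conv)
  then show ?thesis using card_edges_nbrs[OF mg0] by simp
qed


lemma deg0: assumes "u \<in> V0"
  shows "card {v. (u, v) \<in> A0} = 1 \<and> card {v. (v, u) \<in> A0} = 1 \<and> card {e \<in> E0. u \<in> e} = 3"
  using assms out0 in0 edeg0 by (simp add: V0_def)

lemma has5: "has_cycle_of_length V0 E0 A0 5"
proof -
  let ?vs = "[0,11,10,9,15::nat]" and ?bs = "[True,True,True,False,False]"
  have st: "\<forall>i<5. if ?bs ! i then (?vs ! i, ?vs ! ((i + 1) mod 5)) \<in> A0
                 else {?vs ! i, ?vs ! ((i + 1) mod 5)} \<in> E0"
    unfolding all5 by (simp add: A0_iff E0_iff sl_def el_def)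
  have d: "distinct (map (cycle_step ?vs ?bs) [0..<5])"
    unfolding u5 by (simp add: cycle_step_def doubleton_eq_iff)
  have "5 \<ge> (1::nat)" "length ?vs = 5" "length ?bs = 5" "distinct ?vs" "set ?vs \<subseteq> V0"
    by (auto simp: V0_def)
  then show ?thesis unfolding has_cycle_of_length_def using st d by blast
qed

lemma no3_0: "\<not> has_cycle_of_length V0 E0 A0 3"
proof
  assume "has_cycle_of_length V0 E0 A0 3"
  then obtain a b c where h: "adj E0 A0 a b" "adj E0 A0 b c" "adj E0 A0 c a" "a \<noteq> b" "b \<noteq> c" "a \<noteq> c" "a \<in> V0"
    using cyc3_ex by blast
  have "a \<in> set [0..<24]" using h(7) by (simp add: V0_def)
  then show False using chk3 adj0[OF h(1)] adj0[OF h(2)] adj0[OF h(3)] h(4-6)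
    unfolding list_all_iff by blast
qed

lemma no4_0: "\<not> has_cycle_of_length V0 E0 A0 4"
proof
  assume "has_cycle_of_length V0 E0 A0 4"
  then obtain a b c d where h: "adj E0 A0 a b" "adj E0 A0 b c" "adj E0 A0 c d" "adj E0 A0 d a"
    "a \<noteq> b" "b \<noteq> c" "a \<noteq> c" "a \<noteq> d" "b \<noteq> d" "c \<noteq> d" "a \<in> V0"
    using cyc4_ex by blast
  have "a \<in> set [0..<24]" using h(11) by (simp add: V0_def)
  then show False using chk4 adj0[OF h(1)] adj0[OF h(2)] adj0[OF h(3)] adj0[OF h(4)] h(5-10)
    unfolding list_all_iff by blast
qed

lemma girth0: "girth V0 E0 A0 5"
  unfolding girth_def
proof (intro conjI allI impI)
  show "has_cycle_of_length V0 E0 A0 5" by (rule has5)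
  fix k :: nat assume "k < 5"
  then have "k = 0 \<or> k = 1 \<or> k = 2 \<or> k = 3 \<or> k = 4" by auto
  moreover have "\<not> has_cycle_of_length V0 E0 A0 0" unfolding has_cycle_of_length_def by simp
  ultimately show "\<not> has_cycle_of_length V0 E0 A0 k"
    using no_cyc1[OF mg0] no_cyc2[OF mg0] no3_0 no4_0 by blast
qed

lemma wit: "zrg_mixed_graph 1 3 5 V0 E0 A0"
  unfolding zrg_mixed_graph_def using mg0 deg0 girth0 by blast

lemma cardV0: "card V0 = 24" by (simp add: V0_def)


theorem lemma4:
  shows "20 \<le> mixed_cage_order 1 3 5 \<and> mixed_cage_order 1 3 5 \<le> 28"
proof -
  let ?P = "\<lambda>n. \<exists>V E A. zrg_mixed_graph 1 3 5 V E A \<and> card V = n"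
  have P24: "?P 24" using wit cardV0 by blast
  have le: "mixed_cage_order 1 3 5 \<le> 24"
    unfolding mixed_cage_order_def by (rule Least_le[of ?P, OF P24])
  have "?P (mixed_cage_order 1 3 5)"
    unfolding mixed_cage_order_def by (rule LeastI[of ?P, OF P24])
  then obtain V E A where "zrg_mixed_graph 1 3 5 V E A" "card V = mixed_cage_order 1 3 5" by blast
  then have "20 \<le> mixed_cage_order 1 3 5" using lower_bound by metis
  then show ?thesis using le by simp
qed

end
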